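(* Let $N=k_1 b_1=k_2 b_2$ with positive integers $k_1,b_1,k_2,b_2$. Let $\mathcal{B}_1\cong\mathrm{O}(b_1)^{k_1}$ be the group of $N\times N$ block-diagonal matrices with $k_1$ orthogonal diagonal blocks of size $b_1\times b_1$, and $\mathcal{B}_2\cong \mathrm{O}(b_2)^{k_2}$ the group of $N\times N$ block-diagonal matrices with $k_2$ orthogonal diagonal blocks of size $b_2\times b_2$; let $G=\mathcal{B}_2\times\mathcal{B}_1$. Let $P_1$ be the $N\times N$ perfect shuffle permutation matrix defined by $P_1(e_a\otimes e_c)=e_c\otimes e_a$ for all standard basis vectors $e_a\in\mathbb{R}^{k_1}$, $e_c\in\mathbb{R}^{b_1}$ (so that $P_1(X\otimes Y)P_1^\top=Y\otimes X$ for all $X\in\mathbb{R}^{k_1\times k_1}$, $Y\in\mathbb{R}^{b_1\times b_1}$). Consider the stabilizer $$\operatorname{Stab}_G(P_1)=\{(B_2,B_1)\in G : B_2 P_1 B_1^\top = P_1\}.$$ If $k_1\ge b_2$, then every $(B_2,B_1)\in\operatorname{Stab}_G(P_1)$ has $B_2$ diagonal with diagonal entries in $\{\pm1\}$ (and $B_1=P_1^\top B_2 P_1$); in particular $\operatorname{Stab}_G(P_1)$ is a finite, hence discrete, subgroup of $G$. The same conclusion holds when all orthogonal blocks are required to lie in the special orthogonal groups $\mathrm{SO}(b_1)$, $\mathrm{SO}(b_2)$.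
   Context: The block-diagonal matrices in $\mathcal{B}_1$ have the form $\sum_{a=1}^{k_1} E_{aa}\otimes M_a$ with $E_{aa}$ the $k_1\times k_1$ matrix unit and $M_a\in\mathrm{O}(b_1)$. $\mathrm{SO}(m)$ denotes orthogonal $m\times m$ matrices of determinant $1$. *)

theory Defs
  imports "Jordan_Normal_Form.Determinant"
begin

definition orth_mats :: "nat \<Rightarrow> real mat set" where
  "orth_mats b = {M. M \<in> carrier_mat b b \<and> transpose_mat M * M = 1\<^sub>m b}"

definition sorth_mats :: "nat \<Rightarrow> real mat set" where
  "sorth_mats b = {M. M \<in> orth_mats b \<and> det M = 1}"

text \<open>Block-diagonal (k*b) x (k*b) matrix  sum_a E_aa (x) M_a  with blocks M_a (a < k).
  Index a*b + c corresponds to the basis vector e_a (x) e_c.\<close>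
definition block_diag :: "nat \<Rightarrow> nat \<Rightarrow> (nat \<Rightarrow> real mat) \<Rightarrow> real mat" where
  "block_diag k b M = mat (k*b) (k*b) (\<lambda>(i,j).
     if i div b = j div b then M (i div b) $$ (i mod b, j mod b) else 0)"

definition block_group :: "(nat \<Rightarrow> real mat set) \<Rightarrow> nat \<Rightarrow> nat \<Rightarrow> real mat set" where
  "block_group S k b = {block_diag k b M | M. \<forall>a<k. M a \<in> S b}"

text \<open>Perfect shuffle  P (e_a (x) e_c) = e_c (x) e_a,  e_a in R^k, e_c in R^b.
  Column a*b+c has its single 1 in row c*k+a.\<close>
definition perfect_shuffle :: "nat \<Rightarrow> nat \<Rightarrow> real mat" where
  "perfect_shuffle k b = mat (k*b) (k*b) (\<lambda>(i,j).
     if i = (j mod b) * k + j div b then 1 else 0)"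

definition stab :: "real mat set \<Rightarrow> real mat set \<Rightarrow> real mat \<Rightarrow> (real mat \<times> real mat) set" where
  "stab G2 G1 P = {(B2,B1). B2 \<in> G2 \<and> B1 \<in> G1 \<and> B2 * P * transpose_mat B1 = P}"

definition signed_diag :: "nat \<Rightarrow> real mat \<Rightarrow> bool" where
  "signed_diag n B \<longleftrightarrow> B \<in> carrier_mat n n \<and>
     (\<forall>i<n. \<forall>j<n. i \<noteq> j \<longrightarrow> B $$ (i,j) = 0) \<and> (\<forall>i<n. B $$ (i,i) \<in> {1, -1})"

end

theory Submission
  imports Defs
begin

lemma sum_blocks:
  fixes f :: "nat \<Rightarrow> 'a::comm_monoid_add"
  shows "(\<Sum>l<k*b. f l) = (\<Sum>a<k. \<Sum>c<b. f (a*b+c))"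
proof -
  have "(\<Sum>l<k*b. f l) = (\<Sum>a<k. sum f {a*b..<a*b+b})"
    using sum.nat_group[of f b k] by simp
  also have "\<dots> = (\<Sum>a<k. \<Sum>c<b. f (a*b+c))"
  proof (rule sum.cong[OF refl])
    fix a
    show "sum f {a*b..<a*b+b} = (\<Sum>c<b. f (a*b+c))"
      using sum.shift_bounds_nat_ivl[of f 0 "a*b" b]
      by (simp add: add.commute lessThan_atLeast0)
  qed
  finally show ?thesis .
qed

lemma mult_entry:
  fixes A B :: "'a::comm_ring_1 mat"
  assumes "A \<in> carrier_mat n m" "B \<in> carrier_mat m p" "i < n" "j < p"
  shows "(A*B) $$ (i,j) = (\<Sum>l<m. A$$(i,l) * B$$(l,j))"
  using assms by (simp add: scalar_prod_def lessThan_atLeast0)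

definition sh :: "nat \<Rightarrow> nat \<Rightarrow> nat \<Rightarrow> nat" where
  "sh k b j = (j mod b) * k + j div b"

lemma sh_lt:
  assumes "j < k*b" shows "sh k b j < k*b"
proof -
  have b: "0 < b" using assms by (cases b) auto
  have d: "j div b < k" using assms by (simp add: less_mult_imp_div_less)
  have m: "j mod b \<le> b - 1" using b by (simp add: less_Suc_eq_le[symmetric])
  have "(j mod b) * k \<le> (b-1)*k" using m by simp
  then have "sh k b j < (b-1)*k + k" using d unfolding sh_def by linarith
  also have "\<dots> = k*b" using b by (cases b) auto
  finally show ?thesis .
qed

lemma sh_inv:
  assumes "j < k*b" shows "sh b k (sh k b j) = j"
proof -
  have d: "j div b < k" using assms by (simp add: less_mult_imp_div_less)
  have k: "0 < k" using d by simp
  have "((j mod b) * k + j div b) mod k = j div b" using d by simp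
  moreover have "((j mod b) * k + j div b) div k = j mod b" using d k by simp
  ultimately show ?thesis unfolding sh_def by simp
qed

lemma if01_mult: "(if P then 1 else 0) * (x::real) = (if P then x else 0)" by simp

lemma perm_entry: 
  assumes "i < k*b" "j < k*b"
  shows "perfect_shuffle k b $$ (i,j) = (if i = sh k b j then 1 else 0)"
  using assms by (simp add: perfect_shuffle_def sh_def)

lemma perm_dims[simp]: "dim_row (perfect_shuffle k b) = k*b" "dim_col (perfect_shuffle k b) = k*b"
  by (simp_all add: perfect_shuffle_def)

lemma perm_carrier: "perfect_shuffle k b \<in> carrier_mat (k*b) (k*b)"
  by (simp add: perfect_shuffle_def)

lemma mult_perm_right:
  assumes X: "X \<in> carrier_mat n (k*b)" and "i < n" "j < k*b"
  shows "(X * perfect_shuffle k b) $$ (i,j) = X $$ (i, sh k b j)"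
proof -
  have "(X * perfect_shuffle k b) $$ (i,j) = (\<Sum>l<k*b. X$$(i,l) * (if l = sh k b j then 1 else 0))"
    using assms by (subst mult_entry[OF X perm_carrier]) (auto simp: perm_entry intro!: sum.cong)
  also have "\<dots> = X $$ (i, sh k b j)"
    using sh_lt[OF assms(3)] by (simp add: if_distrib cong: if_cong)
  finally show ?thesis .
qed

lemma mult_permT_left:
  assumes X: "X \<in> carrier_mat (k*b) n" and "i < k*b" "j < n"
  shows "(transpose_mat (perfect_shuffle k b) * X) $$ (i,j) = X $$ (sh k b i, j)"
proof -
  have "(transpose_mat (perfect_shuffle k b) * X) $$ (i,j) = (\<Sum>l<k*b. (if l = sh k b i then 1 else 0) * X$$(l,j))"
    using assms by (subst mult_entry[OF _ X]) (auto simp: perm_entry perm_carrier index_transpose_mat intro!: sum.cong)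
  also have "\<dots> = X $$ (sh k b i, j)"
    using sh_lt[OF assms(2)] by (simp add: if01_mult cong: if_cong)
  finally show ?thesis .
qed

lemma mult_perm_left:
  assumes X: "X \<in> carrier_mat (k*b) n" and "i < k*b" "j < n"
  shows "(perfect_shuffle k b * X) $$ (i,j) = X $$ (sh b k i, j)"
proof -
  have i': "i < b*k" using assms by (simp add: mult.commute)
  have eq: "\<And>l. l < k*b \<Longrightarrow> (i = sh k b l) = (l = sh b k i)"
    using sh_inv sh_inv[OF i'] by (metis mult.commute)
  have "(perfect_shuffle k b * X) $$ (i,j) = (\<Sum>l<k*b. (if i = sh k b l then 1 else 0) * X$$(l,j))"
    using assms by (subst mult_entry[OF perm_carrier X]) (auto simp: perm_entry intro!: sum.cong)
  also have "\<dots> = (\<Sum>l<k*b. (if l = sh b k i then 1 else 0) * X$$(l,j))"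
    by (rule sum.cong) (auto simp: eq)
  also have "\<dots> = X $$ (sh b k i, j)"
    using sh_lt[OF i'] by (simp add: if01_mult mult.commute[of k] cong: if_cong)
  finally show ?thesis .
qed

lemma bd_carrier: "block_diag k b M \<in> carrier_mat (k*b) (k*b)"
  by (simp add: block_diag_def)

lemma bd_dims[simp]: "dim_row (block_diag k b M) = k*b" "dim_col (block_diag k b M) = k*b"
  by (simp_all add: block_diag_def)

lemma bd_entry:
  assumes "i < k*b" "j < k*b"
  shows "block_diag k b M $$ (i,j) = (if i div b = j div b then M (i div b) $$ (i mod b, j mod b) else 0)"
  using assms by (simp add: block_diag_def)

lemma bd_orth:
  assumes M: "\<forall>a<k. M a \<in> orth_mats b"
  shows "transpose_mat (block_diag k b M) * block_diag k b M = 1\<^sub>m (k*b)"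
proof (rule eq_matI)
  let ?B = "block_diag k b M"
  fix i j assume i: "i < dim_row (1\<^sub>m (k*b))" and j: "j < dim_col (1\<^sub>m (k*b))"
  then have i: "i < k*b" and j: "j < k*b" by auto
  have b: "0 < b" using i by (cases b) auto
  have id: "i div b < k" "j div b < k" using i j by (simp_all add: less_mult_imp_div_less)
  have "(transpose_mat ?B * ?B) $$ (i,j) = (\<Sum>l<k*b. ?B $$ (l,i) * ?B $$ (l,j))"
    using i j by (subst mult_entry[OF _ bd_carrier]) (auto intro!: sum.cong simp: index_transpose_mat)
  also have "\<dots> = (\<Sum>a<k. \<Sum>c<b. ?B $$ (a*b+c,i) * ?B $$ (a*b+c,j))"
    by (rule sum_blocks)
  also have "\<dots> = (\<Sum>a<k. if a = i div b \<and> a = j div b then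
       (\<Sum>c<b. M a $$ (c, i mod b) * M a $$ (c, j mod b)) else 0)"
  proof (rule sum.cong[OF refl])
    fix a assume a: "a \<in> {..<k}"
    have lt: "\<And>c. c < b \<Longrightarrow> a*b+c < k*b"
    proof -
      fix c assume c: "c < b"
      have "a*b+c < a*b+b" using c by simp
      also have "\<dots> = (Suc a)*b" by simp
      also have "\<dots> \<le> k*b" using a by (intro mult_right_mono) auto
      finally show "a*b+c < k*b" .
    qed
    show "(\<Sum>c<b. ?B $$ (a*b+c,i) * ?B $$ (a*b+c,j)) = (if a = i div b \<and> a = j div b then
       (\<Sum>c<b. M a $$ (c, i mod b) * M a $$ (c, j mod b)) else 0)"
      using b by (auto simp: bd_entry lt i j intro!: sum.cong sum.neutral)
  qed
  also have "\<dots> = (if i div b = j div b then (transpose_mat (M (i div b)) * M (i div b)) $$ (i mod b, j mod b) else 0)"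
  proof -
    have Mc: "M (i div b) \<in> carrier_mat b b" using M id unfolding orth_mats_def by auto
    have "(transpose_mat (M (i div b)) * M (i div b)) $$ (i mod b, j mod b)
       = (\<Sum>c<b. M (i div b) $$ (c, i mod b) * M (i div b) $$ (c, j mod b))"
      using b Mc by (subst mult_entry[OF _ Mc]) (auto intro!: sum.cong simp: index_transpose_mat)
    note eq = this
    show ?thesis
    proof (cases "i div b = j div b")
      case True
      then have "(\<Sum>a<k. if a = i div b \<and> a = j div b then
       (\<Sum>c<b. M a $$ (c, i mod b) * M a $$ (c, j mod b)) else 0)
        = (\<Sum>a<k. if a = i div b then
       (\<Sum>c<b. M (i div b) $$ (c, i mod b) * M (i div b) $$ (c, j mod b)) else 0)"
        by (intro sum.cong) auto
      also have "\<dots> = (\<Sum>c<b. M (i div b) $$ (c, i mod b) * M (i div b) $$ (c, j mod b))"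
        using id by (simp add: sum.delta')
      finally show ?thesis using True eq by simp
    next
      case False
      then show ?thesis by (simp add: sum.neutral)
    qed
  qed
  also have "\<dots> = 1\<^sub>m (k*b) $$ (i,j)"
  proof -
    have "transpose_mat (M (i div b)) * M (i div b) = 1\<^sub>m b" using M id unfolding orth_mats_def by auto
    moreover have "(i div b = j div b \<and> i mod b = j mod b) = (i = j)"
      by (metis div_mult_mod_eq)
    ultimately show ?thesis using b i j by auto
  qed
  finally show "(transpose_mat ?B * ?B) $$ (i,j) = 1\<^sub>m (k*b) $$ (i,j)" .
qed auto

lemma arith_key:
  fixes i m k1 b2 :: nat
  assumes "i div b2 = m div b2" "i mod k1 = m mod k1" "b2 \<le> k1" "i < m" and b: "0 < b2"
  shows False
proof -
  have "m - i < b2"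
  proof -
    have "m < (m div b2) * b2 + b2" using b by (metis add_less_cancel_left div_mult_mod_eq mod_less_divisor)
    then have "m < (i div b2) * b2 + b2" using assms(1) by simp
    moreover have "(i div b2) * b2 \<le> i" by simp
    moreover have "\<And>X::nat. m < X + b2 \<Longrightarrow> X \<le> i \<Longrightarrow> m - i < b2" using b by linarith
    ultimately show ?thesis by blast
  qed
  moreover have "k1 dvd m - i" using assms(2,4) mod_eq_dvd_iff_nat[of i m k1] by simp
  then have "k1 \<le> m - i" using assms(4) by (simp add: dvd_imp_le)
  ultimately show False using assms(3) by linarith
qed

lemma stab_main:
  fixes N k1 b1 k2 b2 :: nat
  assumes pos: "0 < k1" "0 < b1" "0 < k2" "0 < b2"
    and N1: "N = k1 * b1" and N2: "N = k2 * b2"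
    and kb: "k1 \<ge> b2"
    and st: "(B2,B1) \<in> stab (block_group orth_mats k2 b2) (block_group orth_mats k1 b1) (perfect_shuffle k1 b1)"
  shows "signed_diag N B2 \<and> B1 = transpose_mat (perfect_shuffle k1 b1) * B2 * perfect_shuffle k1 b1"
proof -
  let ?P = "perfect_shuffle k1 b1"
  from st obtain M2 M1 where B2: "B2 = block_diag k2 b2 M2" and M2: "\<forall>a<k2. M2 a \<in> orth_mats b2"
    and B1: "B1 = block_diag k1 b1 M1" and M1: "\<forall>a<k1. M1 a \<in> orth_mats b1"
    and eq: "B2 * ?P * transpose_mat B1 = ?P"
    unfolding stab_def block_group_def by auto
  have B2c: "B2 \<in> carrier_mat N N" using B2 N2 bd_carrier by simp
  have B1c: "B1 \<in> carrier_mat N N" using B1 N1 bd_carrier by simp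
  have Pc: "?P \<in> carrier_mat N N" using N1 perm_carrier by simp
  have o1: "transpose_mat B1 * B1 = 1\<^sub>m N" using bd_orth[OF M1] B1 N1 by simp
  have o2: "transpose_mat B2 * B2 = 1\<^sub>m N" using bd_orth[OF M2] B2 N2 by simp
  have BP: "B2 * ?P = ?P * B1"
  proof -
    have "?P * B1 = B2 * ?P * transpose_mat B1 * B1" using eq by simp
    also have "\<dots> = B2 * ?P * (transpose_mat B1 * B1)"
      using B1c B2c Pc by (intro assoc_mult_mat[of _ N N _ N _ N]) auto
    also have "\<dots> = B2 * ?P" using o1 B2c Pc by (simp add: right_mult_one_mat[of _ N N])
    finally show ?thesis by simp
  qed
  have key: "B2 $$ (i,m) = B1 $$ (sh b1 k1 i, sh b1 k1 m)" if i: "i < N" and m: "m < N" for i m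
  proof -
    have m': "m < b1*k1" using m N1 by (simp add: mult.commute)
    have s: "sh b1 k1 m < k1*b1" using sh_lt[OF m'] by (simp add: mult.commute)
    have "B2 $$ (i,m) = (B2 * ?P) $$ (i, sh b1 k1 m)"
      using mult_perm_right[of B2 N k1 b1 i "sh b1 k1 m"] B2c N1 i s sh_inv[OF m'] by simp
    also have "\<dots> = (?P * B1) $$ (i, sh b1 k1 m)" using BP by simp
    also have "\<dots> = B1 $$ (sh b1 k1 i, sh b1 k1 m)"
      using mult_perm_left[of B1 k1 b1 N i "sh b1 k1 m"] B1c N1 i s by simp
    finally show ?thesis .
  qed
  have off: "B2 $$ (i,m) = 0" if i: "i < N" and m: "m < N" and ne: "i \<noteq> m" for i m
  proof (cases "i div b2 = m div b2")
    case False
    then show ?thesis using B2 bd_entry[of i k2 b2 m M2] i m N2 by simp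
  next
    case True
    have shd: "sh b1 k1 x div b1 = x mod k1" if "x < N" for x
    proof -
      have "x div k1 < b1" using that N1 by (simp add: less_mult_imp_div_less mult.commute)
      then show ?thesis unfolding sh_def by simp
    qed
    have i': "i < b1*k1" "m < b1*k1" using i m N1 by (simp_all add: mult.commute)
    have lt: "sh b1 k1 i < k1*b1" "sh b1 k1 m < k1*b1"
      using sh_lt[OF i'(1)] sh_lt[OF i'(2)] by (simp_all add: mult.commute)
    have "i mod k1 \<noteq> m mod k1"
      using arith_key[OF True _ kb _ pos(4)] arith_key[OF True[symmetric] _ kb _ pos(4)] ne by (metis linorder_neqE_nat)
    then show ?thesis using key[OF i m] B1 bd_entry[OF lt, of M1] shd[OF i] shd[OF m] by simp
  qed
  have diag: "B2 $$ (i,i) \<in> {1,-1}" if i: "i < N" for i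
  proof -
    have "1 = (transpose_mat B2 * B2) $$ (i,i)" using o2 i by simp
    also have "\<dots> = (\<Sum>l<N. B2 $$ (l,i) * B2 $$ (l,i))"
      using i B2c by (subst mult_entry[OF _ B2c]) (auto intro!: sum.cong simp: index_transpose_mat)
    also have "\<dots> = (\<Sum>l<N. if l = i then B2 $$ (i,i) * B2 $$ (i,i) else 0)"
      using off i by (intro sum.cong) auto
    also have "\<dots> = B2 $$ (i,i) * B2 $$ (i,i)" using i by simp
    finally have "B2 $$ (i,i) * B2 $$ (i,i) = 1" by simp
    then show ?thesis by (metis insertI1 insertI2 mult_cancel_right1 square_eq_1_iff)
  qed
  have sd: "signed_diag N B2" unfolding signed_diag_def using B2c off diag by auto
  have "B1 = transpose_mat ?P * B2 * ?P"
  proof (rule eq_matI)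
    fix x y assume "x < dim_row (transpose_mat ?P * B2 * ?P)" "y < dim_col (transpose_mat ?P * B2 * ?P)"
    then have x: "x < N" and y: "y < N" using N1 by auto
    have x': "x < k1*b1" "y < k1*b1" using x y N1 by auto
    have lt: "sh k1 b1 x < N" "sh k1 b1 y < N" using sh_lt[OF x'(1)] sh_lt[OF x'(2)] N1 by auto
    have PB: "transpose_mat ?P * B2 \<in> carrier_mat N N" using Pc B2c by auto
    have "(transpose_mat ?P * B2 * ?P) $$ (x,y) = (transpose_mat ?P * B2) $$ (x, sh k1 b1 y)"
      using mult_perm_right[of "transpose_mat ?P * B2" N k1 b1 x y] PB N1 x y by simp
    also have "\<dots> = B2 $$ (sh k1 b1 x, sh k1 b1 y)"
      using mult_permT_left[of B2 k1 b1 N x "sh k1 b1 y"] B2c N1 x lt by simp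
    also have "\<dots> = B1 $$ (x,y)" using key[OF lt] sh_inv[OF x'(1)] sh_inv[OF x'(2)] by simp
    finally show "B1 $$ (x,y) = (transpose_mat ?P * B2 * ?P) $$ (x,y)" by simp
  qed (use B1c Pc N1 in auto)
  then show ?thesis using sd by simp
qed

lemma finite_signed_diag: "finite {B. signed_diag n B}"
proof -
  let ?F = "\<lambda>f. mat n n (\<lambda>(i,j). if i = j then f i else (0::real))"
  have "{B. signed_diag n B} \<subseteq> ?F ` (PiE {..<n} (\<lambda>_. {1,-1}))"
  proof
    fix B assume "B \<in> {B. signed_diag n B}"
    then have sd: "signed_diag n B" by simp
    let ?f = "\<lambda>i. if i < n then B $$ (i,i) else undefined"
    have "?f \<in> PiE {..<n} (\<lambda>_. {1,-1})" using sd unfolding signed_diag_def by (auto simp: PiE_iff extensional_def)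
    moreover have Beq: "B = ?F ?f"
    proof (rule eq_matI)
      fix i j assume "i < dim_row (?F ?f)" "j < dim_col (?F ?f)"
      then have ij: "i < n" "j < n" by auto
      show "B $$ (i,j) = ?F ?f $$ (i,j)"
      proof (cases "i = j")
        case True then show ?thesis using ij by simp
      next
        case False
        have "B $$ (i,j) = 0" using ij False sd unfolding signed_diag_def by blast
        then show ?thesis using ij False by simp
      qed
    next
      show "dim_row B = dim_row (?F ?f)" using sd unfolding signed_diag_def carrier_mat_def by simp
    next
      show "dim_col B = dim_col (?F ?f)" using sd unfolding signed_diag_def carrier_mat_def by simp
    qed
    ultimately show "B \<in> ?F ` (PiE {..<n} (\<lambda>_. {1,-1}))" by (intro image_eqI[where f="?F" and x="?f"])
  qed
  moreover have "finite (PiE {..<n} (\<lambda>_. {1::real,-1}))" by (intro finite_PiE) auto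
  ultimately show ?thesis by (rule finite_subset[OF _ finite_imageI])
qed

lemma block_group_mono: "(\<And>b. S b \<subseteq> T b) \<Longrightarrow> block_group S k b \<subseteq> block_group T k b"
  unfolding block_group_def by blast

lemma stab_mono: "G2 \<subseteq> H2 \<Longrightarrow> G1 \<subseteq> H1 \<Longrightarrow> stab G2 G1 P \<subseteq> stab H2 H1 P"
  unfolding stab_def by auto

theorem mainTheorem3:
  fixes N k1 b1 k2 b2 :: nat
  assumes "0 < k1" "0 < b1" "0 < k2" "0 < b2"
    and "N = k1 * b1" "N = k2 * b2"
    and "k1 \<ge> b2"
  shows "(\<forall>(B2,B1) \<in> stab (block_group orth_mats k2 b2) (block_group orth_mats k1 b1)
                          (perfect_shuffle k1 b1).
            signed_diag N B2 \<and>
            B1 = transpose_mat (perfect_shuffle k1 b1) * B2 * perfect_shuffle k1 b1)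
       \<and> finite (stab (block_group orth_mats k2 b2) (block_group orth_mats k1 b1)
                          (perfect_shuffle k1 b1))
       \<and> (\<forall>(B2,B1) \<in> stab (block_group sorth_mats k2 b2) (block_group sorth_mats k1 b1)
                          (perfect_shuffle k1 b1).
            signed_diag N B2 \<and>
            B1 = transpose_mat (perfect_shuffle k1 b1) * B2 * perfect_shuffle k1 b1)
       \<and> finite (stab (block_group sorth_mats k2 b2) (block_group sorth_mats k1 b1)
                          (perfect_shuffle k1 b1))"
proof -
  let ?P = "perfect_shuffle k1 b1"
  let ?S = "stab (block_group orth_mats k2 b2) (block_group orth_mats k1 b1) ?P"
  let ?T = "stab (block_group sorth_mats k2 b2) (block_group sorth_mats k1 b1) ?P"
  have A: "\<forall>(B2,B1) \<in> ?S. signed_diag N B2 \<and> B1 = transpose_mat ?P * B2 * ?P"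
    using stab_main[OF assms] by blast
  have sub: "?T \<subseteq> ?S"
    by (intro stab_mono block_group_mono) (auto simp: sorth_mats_def)
  have fin: "finite ?S"
  proof -
    have "?S \<subseteq> (\<lambda>B. (B, transpose_mat ?P * B * ?P)) ` {B. signed_diag N B}"
    proof
      fix p assume p: "p \<in> ?S"
      obtain B2 B1 where pe: "p = (B2,B1)" by (cases p)
      have "signed_diag N B2 \<and> B1 = transpose_mat ?P * B2 * ?P" using A p pe by blast
      then show "p \<in> (\<lambda>B. (B, transpose_mat ?P * B * ?P)) ` {B. signed_diag N B}"
        using pe by blast
    qed
    then show ?thesis using finite_signed_diag finite_subset by blast
  qed
  have A2: "\<forall>(B2,B1) \<in> ?T. signed_diag N B2 \<and> B1 = transpose_mat ?P * B2 * ?P"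
    using A sub by blast
  have fin2: "finite ?T" using fin sub by (rule finite_subset[rotated])
  show ?thesis using A A2 fin fin2 by (intro conjI)
qed

end
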